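(* Let $k\ge d$ and let $(\mathbf a_1,\mathbf b_1),\dots,(\mathbf a_k,\mathbf b_k)$ be i.i.d. copies of a pair of random vectors $(\mathbf a,\mathbf b)$ in $\mathbb R^d\times\mathbb R^d$ such that $\mathbb E[\mathbf a\mathbf b^\top]$ exists (all entries $\mathbb E[a_ib_j]$ finite). Let $\mathbf A,\mathbf B\in\mathbb R^{k\times d}$ have $i$-th rows $\mathbf a_i^\top$ and $\mathbf b_i^\top$. Then $\mathbb E[\det(\mathbf A^\top\mathbf B)]=d!\binom{k}{d}\det(\mathbb E[\mathbf a\mathbf b^\top])$. *)

theory Defs
  imports "HOL-Probability.Probability"
begin

definition gram_AtB :: "nat \<Rightarrow> (nat \<Rightarrow> real^'d) \<Rightarrow> (nat \<Rightarrow> real^'d) \<Rightarrow> real^'d^'d" where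
  "gram_AtB k a b = (\<chi> i j. \<Sum>l<k. a l $ i * b l $ j)"

end

theory Submission
  imports Defs
begin

lemma key:
  fixes M :: "'w measure"
    and Z :: "'w \<Rightarrow> (real^'d) \<times> (real^'d)"
    and X :: "nat \<Rightarrow> 'w \<Rightarrow> (real^'d) \<times> (real^'d)"
    and f :: "'d \<Rightarrow> nat" and q :: "'d \<Rightarrow> 'd"
  assumes P: "prob_space M"
    and Zm: "Z \<in> borel_measurable M"
    and Xm: "\<And>i. i < k \<Longrightarrow> X i \<in> borel_measurable M"
    and ind: "prob_space.indep_vars M (\<lambda>_. borel) X {..<k}"
    and dis: "\<And>i. i < k \<Longrightarrow> distr M borel (X i) = distr M borel Z"
    and intZ: "\<And>i j. integrable M (\<lambda>w. fst (Z w) $ i * snd (Z w) $ j)"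
    and inj: "inj f" and fk: "\<And>i. f i < k"
  shows "integrable M (\<lambda>w. \<Prod>i\<in>UNIV. fst (X (f i) w) $ i * snd (X (f i) w) $ q i)
     \<and> (\<integral>w. (\<Prod>i\<in>UNIV. fst (X (f i) w) $ i * snd (X (f i) w) $ q i) \<partial>M)
        = (\<Prod>i\<in>UNIV. \<integral>w. fst (Z w) $ i * snd (Z w) $ q i \<partial>M)"
proof -
  interpret prob_space M by (rule P)
  define g where "g = inv f"
  define \<phi> where "\<phi> l x = fst x $ g l * snd x $ q (g l)" for l and x :: "(real^'d) \<times> (real^'d)"
  have gf: "g (f i) = i" for i unfolding g_def using inj by simp
  have eq: "(\<Prod>i\<in>UNIV. fst (X (f i) w) $ i * snd (X (f i) w) $ q i) = (\<Prod>l\<in>f`UNIV. \<phi> l (X l w))" for w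
    by (simp add: prod.reindex[OF inj] \<phi>_def gf)
  have meas: "\<phi> l \<in> borel_measurable borel" for l
    unfolding \<phi>_def by (intro borel_measurable_continuous_onI continuous_intros)
  have sub: "f ` UNIV \<subseteq> {..<k}" using fk by auto
  have indY: "indep_vars (\<lambda>_. borel) (\<lambda>l w. \<phi> l (X l w)) (f`UNIV)"
    by (rule indep_vars_compose2[OF indep_vars_subset[OF ind sub]]) (simp add: meas)
  have intl: "integrable M (\<lambda>w. \<phi> l (X l w)) \<and> (\<integral>w. \<phi> l (X l w) \<partial>M) = (\<integral>w. \<phi> l (Z w) \<partial>M)"
    if "l \<in> f`UNIV" for l
  proof -
    have lk: "l < k" using that sub by auto
    have iZ: "integrable M (\<lambda>w. \<phi> l (Z w))" unfolding \<phi>_def by (rule intZ)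
    have "integrable M (\<lambda>w. \<phi> l (X l w)) = integrable (distr M borel (X l)) (\<phi> l)"
      by (rule integrable_distr_eq[symmetric]) (auto intro: Xm lk meas)
    also have "\<dots> = integrable (distr M borel Z) (\<phi> l)" using dis[OF lk] by simp
    also have "\<dots> = integrable M (\<lambda>w. \<phi> l (Z w))"
      by (rule integrable_distr_eq) (auto intro: Zm meas)
    finally have 1: "integrable M (\<lambda>w. \<phi> l (X l w))" using iZ by simp
    have "(\<integral>w. \<phi> l (X l w) \<partial>M) = integral\<^sup>L (distr M borel (X l)) (\<phi> l)"
      by (rule integral_distr[symmetric]) (auto intro: Xm lk meas)
    also have "\<dots> = integral\<^sup>L (distr M borel Z) (\<phi> l)" using dis[OF lk] by simp
    also have "\<dots> = (\<integral>w. \<phi> l (Z w) \<partial>M)"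
      by (rule integral_distr) (auto intro: Zm meas)
    finally show ?thesis using 1 by simp
  qed
  have "integrable M (\<lambda>w. \<Prod>l\<in>f`UNIV. \<phi> l (X l w))"
    by (rule indep_vars_integrable) (use indY intl in auto)
  moreover have "(\<integral>w. (\<Prod>l\<in>f`UNIV. \<phi> l (X l w)) \<partial>M) = (\<Prod>l\<in>f`UNIV. \<integral>w. \<phi> l (X l w) \<partial>M)"
    by (rule indep_vars_lebesgue_integral) (use indY intl in auto)
  moreover have "(\<Prod>l\<in>f`UNIV. \<integral>w. \<phi> l (X l w) \<partial>M) = (\<Prod>l\<in>f`UNIV. \<integral>w. \<phi> l (Z w) \<partial>M)"
    using intl by (intro prod.cong) auto
  moreover have "(\<Prod>l\<in>f`UNIV. \<integral>w. \<phi> l (Z w) \<partial>M) = (\<Prod>i\<in>UNIV. \<integral>w. fst (Z w) $ i * snd (Z w) $ q i \<partial>M)"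
    by (simp add: prod.reindex[OF inj] \<phi>_def gf)
  ultimately show ?thesis unfolding eq by simp
qed


lemma det_expand:
  fixes a b :: "nat \<Rightarrow> real^'d"
  shows "det (gram_AtB k a b) = (\<Sum>f\<in>{f\<in>PiE UNIV (\<lambda>_. {..<k}). inj f}. \<Sum>p\<in>{p. p permutes (UNIV::'d set)}.
      of_int (sign p) * (\<Prod>i\<in>UNIV. a (f i) $ i * b (f i) $ p i))"
proof -
  let ?F = "PiE (UNIV::'d set) (\<lambda>_. {..<k})"
  let ?P = "{p. p permutes (UNIV::'d set)}"
  have "det (gram_AtB k a b) = (\<Sum>p\<in>?P. of_int (sign p) * (\<Prod>i\<in>UNIV. \<Sum>l\<in>{..<k}. a l $ i * b l $ p i))"
    by (simp add: det_def gram_AtB_def)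
  also have "\<dots> = (\<Sum>p\<in>?P. \<Sum>f\<in>?F. of_int (sign p) * (\<Prod>i\<in>UNIV. a (f i) $ i * b (f i) $ p i))"
    by (simp add: prod_sum_PiE sum_distrib_left)
  also have "\<dots> = (\<Sum>f\<in>?F. \<Sum>p\<in>?P. of_int (sign p) * (\<Prod>i\<in>UNIV. a (f i) $ i * b (f i) $ p i))"
    by (rule sum.swap)
  also have "\<dots> = (\<Sum>f\<in>{f\<in>?F. inj f}. \<Sum>p\<in>?P. of_int (sign p) * (\<Prod>i\<in>UNIV. a (f i) $ i * b (f i) $ p i))"
  proof (rule sum.mono_neutral_right)
    show "finite ?F" by (simp add: finite_PiE)
    show "{f\<in>?F. inj f} \<subseteq> ?F" by auto
    show "\<forall>f\<in>?F - {f\<in>?F. inj f}. (\<Sum>p\<in>?P. of_int (sign p) * (\<Prod>i\<in>UNIV. a (f i) $ i * b (f i) $ p i)) = 0"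
    proof
      fix f assume "f \<in> ?F - {f\<in>?F. inj f}"
      then have "\<not> inj f" by auto
      then obtain i j where ij: "i \<noteq> j" "f i = f j" unfolding inj_def by auto
      have "(\<Sum>p\<in>?P. of_int (sign p) * (\<Prod>i\<in>UNIV. a (f i) $ i * b (f i) $ p i))
          = (\<Prod>i\<in>UNIV. a (f i) $ i) * det (\<chi> i j. b (f i) $ j)"
        by (simp add: det_def sum_distrib_left prod.distrib algebra_simps)
      also have "det (\<chi> i j. b (f i) $ j) = 0"
        by (rule det_identical_rows[OF ij(1)]) (simp add: row_def ij(2))
      finally show "(\<Sum>p\<in>?P. of_int (sign p) * (\<Prod>i\<in>UNIV. a (f i) $ i * b (f i) $ p i)) = 0" by simp
    qed
  qed
  finally show ?thesis .
qed

lemma card_inj_funs: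
  assumes "CARD('d::finite) \<le> k"
  shows "real (card {f\<in>PiE (UNIV::'d set) (\<lambda>_. {..<k}). inj f}) = fact CARD('d) * real (k choose CARD('d))"
proof -
  have "card {f\<in>PiE (UNIV::'d set) (\<lambda>_. {..<k}). inj f} = k ^ (CARD('d) - CARD('d)) * prod ((-) k) {0..<CARD('d)}"
    using card_inj_on_subset_funcset[of "UNIV::'d set" "{..<k}" UNIV] by simp
  then have "real (card {f\<in>PiE (UNIV::'d set) (\<lambda>_. {..<k}). inj f}) = (\<Prod>i=0..<CARD('d). real k - real i)"
    using assms by (simp add: of_nat_diff)
  also have "\<dots> = fact CARD('d) * real (k choose CARD('d))"
    by (simp add: binomial_gbinomial gbinomial_prod_rev)
  finally show ?thesis .
qed


theorem lemma1:
  fixes M :: "'w measure"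
    and Z :: "'w \<Rightarrow> (real^'d) \<times> (real^'d)"
    and X :: "nat \<Rightarrow> 'w \<Rightarrow> (real^'d) \<times> (real^'d)"
    and k :: nat
  assumes "prob_space M"
    and "k \<ge> CARD('d)"
    and "Z \<in> borel_measurable M"
    and "\<And>i. i < k \<Longrightarrow> X i \<in> borel_measurable M"
    and "prob_space.indep_vars M (\<lambda>_. borel) X {..<k}"
    and "\<And>i. i < k \<Longrightarrow> distr M borel (X i) = distr M borel Z"
    and "\<And>i j. integrable M (\<lambda>w. fst (Z w) $ i * snd (Z w) $ j)"
  shows "integrable M (\<lambda>w. det (gram_AtB k (\<lambda>l. fst (X l w)) (\<lambda>l. snd (X l w))))
    \<and> (\<integral>w. det (gram_AtB k (\<lambda>l. fst (X l w)) (\<lambda>l. snd (X l w))) \<partial>M)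
        = fact CARD('d) * real (k choose CARD('d))
          * det (\<chi> i j. \<integral>w. fst (Z w) $ i * snd (Z w) $ j \<partial>M)"
proof -
  let ?FI = "{f\<in>PiE (UNIV::'d set) (\<lambda>_. {..<k}). inj f}"
  let ?P = "{p. p permutes (UNIV::'d set)}"
  define C where "C i j = (\<integral>w. fst (Z w) $ i * snd (Z w) $ j \<partial>M)" for i j
  define T where "T f p w = of_int (sign p) * (\<Prod>i\<in>UNIV. fst (X (f i) w) $ i * snd (X (f i) w) $ p i)"
    for f p and w
  have fin: "finite ?FI" by (simp add: finite_PiE)
  have finP: "finite ?P" by (simp add: finite_permutations)
  have dG: "det (gram_AtB k (\<lambda>l. fst (X l w)) (\<lambda>l. snd (X l w))) = (\<Sum>f\<in>?FI. \<Sum>p\<in>?P. T f p w)" for w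
    unfolding T_def by (rule det_expand)
  have kT: "integrable M (T f p) \<and> (\<integral>w. T f p w \<partial>M) = of_int (sign p) * (\<Prod>i\<in>UNIV. C i (p i))"
    if "f \<in> ?FI" for f p
  proof -
    from that have inj: "inj f" and fk: "\<And>i. f i < k" by (auto simp: PiE_def Pi_def)
    note K = key[OF assms(1,3,4,5,6,7) inj fk, where q=p]
    show ?thesis unfolding T_def C_def using K by auto
  qed
  have int: "integrable M (\<lambda>w. \<Sum>f\<in>?FI. \<Sum>p\<in>?P. T f p w)"
    using kT by (intro Bochner_Integration.integrable_sum) blast
  have "(\<integral>w. (\<Sum>f\<in>?FI. \<Sum>p\<in>?P. T f p w) \<partial>M) = (\<Sum>f\<in>?FI. \<Sum>p\<in>?P. \<integral>w. T f p w \<partial>M)"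
    using kT by (simp add: integral_sum integrable_sum)
  also have "\<dots> = (\<Sum>f\<in>?FI. \<Sum>p\<in>?P. of_int (sign p) * (\<Prod>i\<in>UNIV. C i (p i)))"
    using kT by (intro sum.cong refl) auto
  also have "\<dots> = real (card ?FI) * det (\<chi> i j. C i j)"
    by (simp add: det_def)
  also have "\<dots> = fact CARD('d) * real (k choose CARD('d)) * det (\<chi> i j. C i j)"
    using card_inj_funs[OF assms(2)] by simp
  finally show ?thesis using int unfolding dG C_def by simp
qed

end
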